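(* Let $T$ be an observation table, let $(\equiv,f)$ be a merging map on $T$ of minimal size (i.e. no merging map on $T$ has strictly smaller size), and let $\mathcal{M}$ be the transducer resulting from $(\equiv,f)$. Then $\mathcal{M}$ is compatible with $T$.
   Context: Transducers. A (subsequential string) transducer is a tuple $\mathcal{M}=(\Sigma,\Gamma,Q,q_0,w_0,\delta,\delta_F)$ with finite input alphabet $\Sigma$, finite output alphabet $\Gamma$, finite state set $Q$, initial state $q_0$, initial production $w_0\in\Gamma^*$, partial transition function $\delta:Q\times\Sigma\to Q\times\Gamma^*$ (write $q\xrightarrow{a|w}q'$ when $\delta(q,a)=(q',w)$) and partial final function $\delta_F:Q\to\Gamma^*$ ($q$ is final if $\delta_F(q)$ is defined). Runs are extended to words: $q\xrightarrow{\varepsilon|\varepsilon}{}^*q$, and if $q\xrightarrow{u|w}{}^*q'$ and $q'\xrightarrow{a|w'}q''$ then $q\xrightarrow{ua|ww'}{}^*q''$. The function $\llbracket\mathcal{M}\rrbracket:\Sigma^*\to\Gamma^*$ (partial) is $\llbracket\mathcal{M}\rrbracket(u)=w_0\,w\,\delta_F(q)$ if $q_0\xrightarrow{u|w}{}^*q$ with $q$ final, and undefined otherwise; $\mathrm{dom}$ denotes its domain. The size $|\mathcal{M}|$ is the number of states. Observation tables. Let $P\subseteq\Sigma^*$ be finite and prefix-closed and $S\subseteq\Sigma^*$ finite and suffix-closed, and let $D=(P\cup P\Sigma)\cdot S$. An observation table is a function $T:D\to\Gamma^*\cup\{\#,\bot\}$ (in the learning setting, for a target partial function $\tau$ and a language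 $\mathit{Up}\supseteq\mathrm{dom}(\tau)$: $T(x)=\#$ if $x\notin\mathit{Up}$, $T(x)=\bot$ if $x\in\mathit{Up}\setminus\mathrm{dom}(\tau)$, $T(x)=\tau(x)$ otherwise). By convention $T(x)=\#$ for $x\notin D$. Let $P_T$ be the set of all prefixes of elements of $D$, and $P_\Gamma=\{u\in P_T:\exists v\in\Sigma^*,\ T(uv)\in\Gamma^*\}$. A transducer $\mathcal{M}$ is compatible with $T$ if for all $x\in D$: $T(x)\in\Gamma^*$ implies $\llbracket\mathcal{M}\rrbracket(x)=T(x)$, and $T(x)=\bot$ implies $x\notin\mathrm{dom}(\llbracket\mathcal{M}\rrbracket)$. For words $x,y$ with $x$ a prefix of $y$, $x^{-1}y$ denotes the word $z$ with $xz=y$. Merging maps. A merging map on $T$ is a pair $(\equiv,f)$ where $\equiv$ is an equivalence relation on $P_T$ and $f$ is a partial function $P_T\to\Gamma^*$ such that for all $u,u'\in P_T$ and $a\in\Sigma$: 1. if $f(u)$ is undefined then ($u\equiv u'$ iff $f(u')$ is undefined); 2. if $T(uv)\in\Gamma^*$ for some $v\in\Sigma^*$, then $f(u)$ is defined and is a prefix of $T(uv)$; 3. if $f(ua)$ is defined then $f(u)$ is defined and is a prefix of $f(ua)$; 4. if $f(u)$ is defined, $u\equiv u'$ and $ua,u'a\in P_T$, then $ua\equiv u'a$, and if moreover $f(ua)$ is defined then $f(u)^{-1}f(ua)=f(u')^{-1}f(u'a)$; 5. if $T(u)\in\Gamma^*$ and $u\equiv u'$ then $T(u')\neq\bot$,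 and if moreover $T(u')\in\Gamma^*$ then $f(u)^{-1}T(u)=f(u')^{-1}T(u')$; 6. if $f(ua)$ is defined and there is no $v\in P_T$ with $v\equiv u$ and $va\in P_\Gamma$, then $f(ua)=f(u)$. The size of $(\equiv,f)$ is the number of $\equiv$-classes contained in $\mathrm{dom}(f)$. Resulting transducer. The transducer resulting from a merging map $(\equiv,f)$ has as states the $\equiv$-classes of elements of $\mathrm{dom}(f)$ (write $q_u$ for the class of $u$), initial state $q_\varepsilon$, initial production $f(\varepsilon)$, transitions $q_u\xrightarrow{a|f(u)^{-1}f(ua)}q_{ua}$ for all $u,ua\in\mathrm{dom}(f)$, and final outputs $\delta_F(q_u)=f(u)^{-1}T(u)$ for every $u\in P_T$ with $T(u)\in\Gamma^*$. *)

theory Defs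
  imports Main "HOL-Library.Sublist"
begin

datatype 'b tval = Out "'b list" | Hash | Bot

(* left quotient x^{-1} y, meaningful when x is a prefix of y *)
definition lquot :: "'b list \<Rightarrow> 'b list \<Rightarrow> 'b list" where
  "lquot x y = drop (length x) y"

definition tdom :: "'a list set \<Rightarrow> 'a list set \<Rightarrow> 'a list set" where
  "tdom P S = {u @ s | u s. (u \<in> P \<or> (\<exists>p a. p \<in> P \<and> u = p @ [a])) \<and> s \<in> S}"

definition obs_table :: "'a list set \<Rightarrow> 'a list set \<Rightarrow> ('a list \<Rightarrow> 'b tval) \<Rightarrow> bool" where
  "obs_table P S T \<longleftrightarrow> finite P \<and> finite S
     \<and> (\<forall>u v. u @ v \<in> P \<longrightarrow> u \<in> P)
     \<and> (\<forall>u v. u @ v \<in> S \<longrightarrow> v \<in> S)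
     \<and> (\<forall>x. x \<notin> tdom P S \<longrightarrow> T x = Hash)"

definition PT :: "'a list set \<Rightarrow> 'a list set \<Rightarrow> 'a list set" where
  "PT P S = {u. \<exists>v. u @ v \<in> tdom P S}"

definition PGamma :: "'a list set \<Rightarrow> 'a list set \<Rightarrow> ('a list \<Rightarrow> 'b tval) \<Rightarrow> 'a list set" where
  "PGamma P S T = {u \<in> PT P S. \<exists>v w. T (u @ v) = Out w}"

definition merging_map ::
  "'a list set \<Rightarrow> 'a list set \<Rightarrow> ('a list \<Rightarrow> 'b tval)
     \<Rightarrow> ('a list \<times> 'a list) set \<Rightarrow> ('a list \<Rightarrow> 'b list option) \<Rightarrow> bool" where
  "merging_map P S T R f \<longleftrightarrow>
     equiv (PT P S) R \<and> dom f \<subseteq> PT P S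
   \<and> (\<forall>u\<in>PT P S. \<forall>u'\<in>PT P S. f u = None \<longrightarrow> ((u, u') \<in> R \<longleftrightarrow> f u' = None))
   \<and> (\<forall>u\<in>PT P S. \<forall>v w. T (u @ v) = Out w \<longrightarrow> (\<exists>y. f u = Some y \<and> prefix y w))
   \<and> (\<forall>u\<in>PT P S. \<forall>a. f (u @ [a]) \<noteq> None \<longrightarrow>
        (\<exists>y. f u = Some y \<and> prefix y (the (f (u @ [a])))))
   \<and> (\<forall>u\<in>PT P S. \<forall>u'\<in>PT P S. \<forall>a. f u \<noteq> None \<and> (u, u') \<in> R
        \<and> u @ [a] \<in> PT P S \<and> u' @ [a] \<in> PT P S \<longrightarrow>
        (u @ [a], u' @ [a]) \<in> R
        \<and> (f (u @ [a]) \<noteq> None \<longrightarrow>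
             lquot (the (f u)) (the (f (u @ [a]))) = lquot (the (f u')) (the (f (u' @ [a])))))
   \<and> (\<forall>u\<in>PT P S. \<forall>u'\<in>PT P S. \<forall>w. T u = Out w \<and> (u, u') \<in> R \<longrightarrow>
        T u' \<noteq> Bot \<and> (\<forall>w'. T u' = Out w' \<longrightarrow> lquot (the (f u)) w = lquot (the (f u')) w'))
   \<and> (\<forall>u\<in>PT P S. \<forall>a. f (u @ [a]) \<noteq> None
        \<and> \<not> (\<exists>v\<in>PT P S. (v, u) \<in> R \<and> v @ [a] \<in> PGamma P S T) \<longrightarrow> f (u @ [a]) = f u)"

definition mm_size ::
  "'a list set \<Rightarrow> 'a list set \<Rightarrow> ('a list \<times> 'a list) set \<Rightarrow> ('a list \<Rightarrow> 'b list option) \<Rightarrow> nat" where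
  "mm_size P S R f = card {C \<in> PT P S // R. C \<subseteq> dom f}"

record ('s, 'a, 'b) transducer =
  states :: "'s set"
  init :: 's
  init_out :: "'b list"
  trans :: "'s \<Rightarrow> 'a \<Rightarrow> ('s \<times> 'b list) option"
  final :: "'s \<Rightarrow> 'b list option"

fun run :: "('s \<Rightarrow> 'a \<Rightarrow> ('s \<times> 'b list) option) \<Rightarrow> 's \<Rightarrow> 'a list \<Rightarrow> ('s \<times> 'b list) option" where
  "run d q [] = Some (q, [])"
| "run d q (a # u) = (case d q a of None \<Rightarrow> None
     | Some (q', w) \<Rightarrow> (case run d q' u of None \<Rightarrow> None
         | Some (q'', w') \<Rightarrow> Some (q'', w @ w')))"

definition sem :: "('s, 'a, 'b) transducer \<Rightarrow> 'a list \<Rightarrow> 'b list option" where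
  "sem M u = (case run (trans M) (init M) u of None \<Rightarrow> None
     | Some (q, w) \<Rightarrow> (case final M q of None \<Rightarrow> None
         | Some z \<Rightarrow> Some (init_out M @ w @ z)))"

definition compatible :: "('s, 'a, 'b) transducer \<Rightarrow> 'a list set \<Rightarrow> 'a list set \<Rightarrow> ('a list \<Rightarrow> 'b tval) \<Rightarrow> bool" where
  "compatible M P S T \<longleftrightarrow> (\<forall>x\<in>tdom P S.
      (\<forall>w. T x = Out w \<longrightarrow> sem M x = Some w) \<and> (T x = Bot \<longrightarrow> sem M x = None))"

definition result_transducer ::
  "'a list set \<Rightarrow> 'a list set \<Rightarrow> ('a list \<Rightarrow> 'b tval)
     \<Rightarrow> ('a list \<times> 'a list) set \<Rightarrow> ('a list \<Rightarrow> 'b list option) \<Rightarrow> ('a list set, 'a, 'b) transducer" where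
  "result_transducer P S T R f =
    \<lparr> states = {R `` {u} | u. u \<in> dom f},
      init = R `` {[]},
      init_out = the (f []),
      trans = (\<lambda>q a. if \<exists>u. u \<in> dom f \<and> u @ [a] \<in> dom f \<and> R `` {u} = q
                 then (let u = (SOME u. u \<in> dom f \<and> u @ [a] \<in> dom f \<and> R `` {u} = q)
                       in Some (R `` {u @ [a]}, lquot (the (f u)) (the (f (u @ [a])))))
                 else None),
      final = (\<lambda>q. if \<exists>u w. u \<in> PT P S \<and> T u = Out w \<and> R `` {u} = q
                 then (let u = (SOME u. u \<in> PT P S \<and> (\<exists>w. T u = Out w) \<and> R `` {u} = q)
                       in (case T u of Out w \<Rightarrow> Some (lquot (the (f u)) w) | _ \<Rightarrow> None))
                 else None) \<rparr>"

end

theory Submission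
  imports Defs
begin

lemma run_snoc:
  "run d q (x @ [a]) = (case run d q x of None \<Rightarrow> None
     | Some (q', w) \<Rightarrow> (case d q' a of None \<Rightarrow> None
         | Some (q'', w') \<Rightarrow> Some (q'', w @ w')))"
  by (induction x arbitrary: q) (auto split: option.splits)

lemma PT_prefix: "x @ y \<in> PT P S \<Longrightarrow> x \<in> PT P S"
proof -
  assume "x @ y \<in> PT P S"
  then obtain v where "(x @ y) @ v \<in> tdom P S" unfolding PT_def by blast
  then have "x @ (y @ v) \<in> tdom P S" by simp
  then show ?thesis unfolding PT_def by blast
qed

lemma lquot_app: "prefix a b \<Longrightarrow> a @ lquot a b = b"
  unfolding lquot_def prefix_def by auto

lemma lquot_trans: "prefix a b \<Longrightarrow> prefix b c \<Longrightarrow> lquot a b @ lquot b c = lquot a c"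
  unfolding lquot_def prefix_def by auto

lemma mm_parts:
  assumes "merging_map P S T R f"
  shows "equiv (PT P S) R" "dom f \<subseteq> PT P S"
    "(\<forall>u\<in>PT P S. \<forall>u'\<in>PT P S. f u = None \<longrightarrow> ((u, u') \<in> R \<longleftrightarrow> f u' = None))"
    "(\<forall>u\<in>PT P S. \<forall>v w. T (u @ v) = Out w \<longrightarrow> (\<exists>y. f u = Some y \<and> prefix y w))"
    "(\<forall>u\<in>PT P S. \<forall>a. f (u @ [a]) \<noteq> None \<longrightarrow>
        (\<exists>y. f u = Some y \<and> prefix y (the (f (u @ [a])))))"
    "(\<forall>u\<in>PT P S. \<forall>u'\<in>PT P S. \<forall>a. f u \<noteq> None \<and> (u, u') \<in> R
        \<and> u @ [a] \<in> PT P S \<and> u' @ [a] \<in> PT P S \<longrightarrow>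
        (u @ [a], u' @ [a]) \<in> R
        \<and> (f (u @ [a]) \<noteq> None \<longrightarrow>
             lquot (the (f u)) (the (f (u @ [a]))) = lquot (the (f u')) (the (f (u' @ [a])))))"
    "(\<forall>u\<in>PT P S. \<forall>u'\<in>PT P S. \<forall>w. T u = Out w \<and> (u, u') \<in> R \<longrightarrow>
        T u' \<noteq> Bot \<and> (\<forall>w'. T u' = Out w' \<longrightarrow> lquot (the (f u)) w = lquot (the (f u')) w'))"
    "(\<forall>u\<in>PT P S. \<forall>a. f (u @ [a]) \<noteq> None
        \<and> \<not> (\<exists>v\<in>PT P S. (v, u) \<in> R \<and> v @ [a] \<in> PGamma P S T) \<longrightarrow> f (u @ [a]) = f u)"
  using assms unfolding merging_map_def apply - by (elim conjE, assumption)+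

lemma trans_step:
  assumes mm: "merging_map P S T R f"
    and y: "y \<in> PT P S" and ya: "y @ [a] \<in> PT P S"
    and tr: "trans (result_transducer P S T R f) (R `` {y}) a = Some (q, ot)"
  shows "q = R `` {y @ [a]} \<and> f y \<noteq> None \<and> f (y @ [a]) \<noteq> None
         \<and> ot = lquot (the (f y)) (the (f (y @ [a])))"
proof -
  have eq: "equiv (PT P S) R" and domf: "dom f \<subseteq> PT P S"
    and c1: "\<forall>u\<in>PT P S. \<forall>u'\<in>PT P S. f u = None \<longrightarrow> ((u, u') \<in> R \<longleftrightarrow> f u' = None)"
    and c4: "\<forall>u\<in>PT P S. \<forall>u'\<in>PT P S. \<forall>a. f u \<noteq> None \<and> (u, u') \<in> R
        \<and> u @ [a] \<in> PT P S \<and> u' @ [a] \<in> PT P S \<longrightarrow>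
        (u @ [a], u' @ [a]) \<in> R
        \<and> (f (u @ [a]) \<noteq> None \<longrightarrow>
             lquot (the (f u)) (the (f (u @ [a]))) = lquot (the (f u')) (the (f (u' @ [a]))))"
    using mm_parts[OF mm] by - (assumption)+
  let ?Q = "\<lambda>u. u \<in> dom f \<and> u @ [a] \<in> dom f \<and> R `` {u} = R `` {y}"
  have ex: "\<exists>u. ?Q u"
  proof (rule ccontr)
    assume "\<not> (\<exists>u. ?Q u)"
    then have "trans (result_transducer P S T R f) (R `` {y}) a = None"
      unfolding result_transducer_def by (simp only: transducer.select_convs if_not_P if_False)
    then show False using tr by simp
  qed
  define u where "u = (SOME u. ?Q u)"
  have Qu: "?Q u" unfolding u_def using someI_ex[OF ex] .
  have tr2: "trans (result_transducer P S T R f) (R `` {y}) a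
      = Some (R `` {u @ [a]}, lquot (the (f u)) (the (f (u @ [a]))))"
    using ex unfolding result_transducer_def u_def by (simp add: Let_def)
  have uP: "u \<in> PT P S" "u @ [a] \<in> PT P S" using Qu domf by auto
  have yR: "y \<in> R `` {y}" using eq y unfolding equiv_def refl_on_def by blast
  have cu: "R `` {u} = R `` {y}" using Qu by blast
  have "y \<in> R `` {u}" using yR unfolding cu .
  then have uy: "(u, y) \<in> R" by simp
  have yu: "(y, u) \<in> R" using uy eq unfolding equiv_def by (meson symD)
  have fu: "f u \<noteq> None" "f (u @ [a]) \<noteq> None" using Qu by auto
  have fy: "f y \<noteq> None"
  proof
    assume "f y = None"
    from c1[rule_format, OF y uP(1) this] yu fu show False by simp
  qed
  have pre4: "f u \<noteq> None \<and> (u, y) \<in> R \<and> u @ [a] \<in> PT P S \<and> y @ [a] \<in> PT P S"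
    using fu uy uP ya by simp
  note c4i = c4[rule_format, OF uP(1) y pre4]
  have uaya: "(u @ [a], y @ [a]) \<in> R" using c4i by (rule conjunct1)
  have lq: "lquot (the (f u)) (the (f (u @ [a]))) = lquot (the (f y)) (the (f (y @ [a])))"
    using conjunct2[OF c4i] fu(2) by (rule mp)
  have yaua: "(y @ [a], u @ [a]) \<in> R" using uaya eq unfolding equiv_def by (meson symD)
  have fya: "f (y @ [a]) \<noteq> None"
  proof
    assume "f (y @ [a]) = None"
    from c1[rule_format, OF ya uP(2) this] yaua fu show False by simp
  qed
  have cls: "R `` {u @ [a]} = R `` {y @ [a]}" using equiv_class_eq[OF eq uaya] .
  have "Some (q, ot) = Some (R `` {u @ [a]}, lquot (the (f u)) (the (f (u @ [a]))))"
    using tr2 unfolding tr .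
  then have "q = R `` {u @ [a]}" "ot = lquot (the (f u)) (the (f (u @ [a])))" by simp_all
  then show ?thesis using cls lq fy fya by simp
qed

lemma trans_ex:
  assumes "f y \<noteq> None" "f (y @ [a]) \<noteq> None"
  shows "trans (result_transducer P S T R f) (R `` {y}) a \<noteq> None"
proof -
  have "\<exists>u. u \<in> dom f \<and> u @ [a] \<in> dom f \<and> R `` {u} = R `` {y}" using assms by blast
  then show ?thesis unfolding result_transducer_def by (simp add: Let_def)
qed

lemma run_state:
  assumes mm: "merging_map P S T R f"
  shows "x \<in> PT P S \<Longrightarrow> run (trans (result_transducer P S T R f)) (R `` {[]}) x = Some (q, w)
     \<Longrightarrow> q = R `` {x}"
proof (induction x arbitrary: q w rule: rev_induct)
  case Nil
  then show ?case by simp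
next
  case (snoc a x)
  have xP: "x \<in> PT P S" using snoc.prems PT_prefix by blast
  obtain q' w0 where r: "run (trans (result_transducer P S T R f)) (R `` {[]}) x = Some (q', w0)"
    using snoc.prems(2) by (auto simp: run_snoc split: option.splits)
  have q': "q' = R `` {x}" using snoc.IH[OF xP r] .
  obtain q'' w' where t: "trans (result_transducer P S T R f) q' a = Some (q'', w')"
    and qq: "q = q''"
    using snoc.prems(2) r by (auto simp: run_snoc split: option.splits)
  show ?case using trans_step[OF mm xP snoc.prems(1)] t q' qq by auto
qed

lemma run_out:
  assumes mm: "merging_map P S T R f"
  shows "x \<in> PT P S \<Longrightarrow> (\<forall>y. prefix y x \<longrightarrow> f y \<noteq> None) \<Longrightarrow>
     run (trans (result_transducer P S T R f)) (R `` {[]}) x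
       = Some (R `` {x}, lquot (the (f [])) (the (f x)))
     \<and> prefix (the (f [])) (the (f x))"
proof (induction x rule: rev_induct)
  case Nil
  then show ?case by (simp add: lquot_def)
next
  case (snoc a x)
  have c3: "\<forall>u\<in>PT P S. \<forall>a. f (u @ [a]) \<noteq> None \<longrightarrow>
        (\<exists>y. f u = Some y \<and> prefix y (the (f (u @ [a]))))"
    using mm_parts(5)[OF mm] .
  have xP: "x \<in> PT P S" using snoc.prems PT_prefix by blast
  have pre: "\<forall>y. prefix y x \<longrightarrow> f y \<noteq> None" using snoc.prems(2)
    by (meson prefix_order.trans prefix_snoc)
  note IH = snoc.IH[OF xP pre]
  have fx: "f x \<noteq> None" "f (x @ [a]) \<noteq> None" using snoc.prems(2) by auto
  obtain q ot where t: "trans (result_transducer P S T R f) (R `` {x}) a = Some (q, ot)"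
    using trans_ex[OF fx, of P S T R] by auto
  have st: "q = R `` {x @ [a]} \<and> ot = lquot (the (f x)) (the (f (x @ [a])))"
    using trans_step[OF mm xP snoc.prems(1) t] by auto
  have px: "prefix (the (f x)) (the (f (x @ [a])))" using c3 xP fx by fastforce
  have p0: "prefix (the (f [])) (the (f (x @ [a])))" using IH px prefix_order.trans by blast
  have lq: "lquot (the (f [])) (the (f x)) @ lquot (the (f x)) (the (f (x @ [a])))
      = lquot (the (f [])) (the (f (x @ [a])))"
    using lquot_trans IH px by blast
  have "run (trans (result_transducer P S T R f)) (R `` {[]}) (x @ [a])
      = Some (q, lquot (the (f [])) (the (f x)) @ ot)"
    unfolding run_snoc using IH t by simp
  moreover have q: "q = R `` {x @ [a]}" and o: "ot = lquot (the (f x)) (the (f (x @ [a])))"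
    using st by blast+
  ultimately have "run (trans (result_transducer P S T R f)) (R `` {[]}) (x @ [a])
      = Some (R `` {x @ [a]}, lquot (the (f [])) (the (f (x @ [a]))))"
    by (simp only: o lq)
  with p0 show ?case by blast
qed

lemma final_some:
  assumes "final (result_transducer P S T R f) q = Some z"
  shows "\<exists>u w. u \<in> PT P S \<and> T u = Out w \<and> R `` {u} = q"
proof (rule ccontr)
  assume "\<not> (\<exists>u w. u \<in> PT P S \<and> T u = Out w \<and> R `` {u} = q)"
  then have "final (result_transducer P S T R f) q = None"
    unfolding result_transducer_def apply simp by blast
  then show False using assms by simp
qed

lemma init_M: "init (result_transducer P S T R f) = R `` {[]}"
  "init_out (result_transducer P S T R f) = the (f [])"
  unfolding result_transducer_def by simp_all

theorem lemma1:
  fixes P S :: "('a::finite) list set"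
    and T :: "'a list \<Rightarrow> ('b::finite) tval"
    and R :: "('a list \<times> 'a list) set"
    and f :: "'a list \<Rightarrow> 'b list option"
  assumes "obs_table P S T"
    and "merging_map P S T R f"
    and "\<forall>R' f'. merging_map P S T R' f' \<longrightarrow> \<not> mm_size P S R' f' < mm_size P S R f"
  shows "compatible (result_transducer P S T R f) P S T"
proof -
  note mm = assms(2)
  have eq: "equiv (PT P S) R"
    and c2: "\<forall>u\<in>PT P S. \<forall>v w. T (u @ v) = Out w \<longrightarrow> (\<exists>y. f u = Some y \<and> prefix y w)"
    and c5: "\<forall>u\<in>PT P S. \<forall>u'\<in>PT P S. \<forall>w. T u = Out w \<and> (u, u') \<in> R \<longrightarrow>
        T u' \<noteq> Bot \<and> (\<forall>w'. T u' = Out w' \<longrightarrow> lquot (the (f u)) w = lquot (the (f u')) w')"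
    using mm_parts[OF mm] by - (assumption)+
  let ?M = "result_transducer P S T R f"
  show ?thesis unfolding compatible_def
  proof (intro ballI conjI allI impI)
    fix x w assume xD: "x \<in> tdom P S" and Tx: "T x = Out w"
    have xP: "x \<in> PT P S" using xD unfolding PT_def by (metis append_Nil2 mem_Collect_eq)
    have pre: "\<forall>y. prefix y x \<longrightarrow> f y \<noteq> None"
    proof (intro allI impI)
      fix y assume "prefix y x"
      then obtain v where "x = y @ v" by (auto simp: prefix_def)
      moreover have "y \<in> PT P S" using \<open>x = y @ v\<close> xP PT_prefix by blast
      ultimately show "f y \<noteq> None" using bspec[OF c2 \<open>y \<in> PT P S\<close>] Tx by auto
    qed
    note R = run_out[OF mm xP pre]
    obtain fx where fx: "f x = Some fx" "prefix fx w" using c2 xP Tx by (metis append_Nil2)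
    have fin: "final ?M (R `` {x}) = Some (lquot fx w)"
    proof -
      let ?Q = "\<lambda>u. u \<in> PT P S \<and> (\<exists>w. T u = Out w) \<and> R `` {u} = R `` {x}"
      have ex: "\<exists>u w. u \<in> PT P S \<and> T u = Out w \<and> R `` {u} = R `` {x}" using xP Tx by blast
      have ex2: "\<exists>u. ?Q u" using xP Tx by blast
      define u where "u = (SOME u. ?Q u)"
      have Qu: "?Q u" unfolding u_def using someI_ex[OF ex2] .
      then obtain w' where w': "T u = Out w'" by blast
      have ux: "(u, x) \<in> R" using Qu xP eq by (simp add: equiv_class_eq_iff)
      have uP: "u \<in> PT P S" using Qu by blast
      have "lquot (the (f u)) w' = lquot (the (f x)) w" using bspec[OF bspec[OF c5 uP] xP] w' ux Tx by auto
      moreover have "final ?M (R `` {x}) = Some (lquot (the (f u)) w')"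
        using ex w' unfolding result_transducer_def u_def by (simp add: Let_def)
      ultimately show ?thesis using fx by simp
    qed
    note init_M[of P S T R f]
    moreover have "the (f []) @ lquot (the (f [])) fx @ lquot fx w = w"
    proof -
      have p1: "prefix (the (f [])) fx" using R fx by simp
      have "lquot (the (f [])) fx @ lquot fx w = lquot (the (f [])) w"
        using lquot_trans[OF p1 fx(2)] .
      moreover have "the (f []) @ lquot (the (f [])) w = w"
        using lquot_app p1 fx(2) prefix_order.trans by blast
      ultimately show ?thesis by simp
    qed
    moreover have r0: "run (trans ?M) (init ?M) x = Some (R `` {x}, lquot (the (f [])) fx)"
      using conjunct1[OF R] fx(1) init_M(1)[of P S T R f] by simp
    ultimately show "sem ?M x = Some w" unfolding sem_def
      by (simp only: r0 fin option.case prod.case init_M(2))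
  next
    fix x assume xD: "x \<in> tdom P S" and Tx: "T x = Bot"
    have xP: "x \<in> PT P S" using xD unfolding PT_def by (metis append_Nil2 mem_Collect_eq)
    show "sem ?M x = None"
    proof (rule ccontr)
      assume "sem ?M x \<noteq> None"
      then obtain q w z where r: "run (trans ?M) (R `` {[]}) x = Some (q, w)"
        and fq: "final ?M q = Some z"
        using init_M[of P S T R f] unfolding sem_def by (auto split: option.splits)
      have q: "q = R `` {x}" using run_state[OF mm xP r] .
      from final_some[OF fq] q obtain u w' where u: "u \<in> PT P S" "T u = Out w'" "R `` {u} = R `` {x}"
        by blast
      have "(u, x) \<in> R" using u xP eq by (simp add: equiv_class_eq_iff)
      then show False using bspec[OF bspec[OF c5 u(1)] xP] u(2) Tx by auto
    qed
  qed
qed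

end
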